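(* If $z$ is a real number with $0<|z|\le 1/\alpha$, then \[ \sum_{k=1}^\infty\frac{F_{2k}\zeta(2k)z^{2k}}{k(2k+1)} = \frac{2\ln\alpha}{\sqrt5}-\frac{\beta\operatorname{Cl}_2(2\pi\alpha z)-\alpha\operatorname{Cl}_2(2\pi\beta z)}{2\sqrt5\,\pi z}, \] \[ \sum_{k=1}^\infty\frac{L_{2k}\zeta(2k)z^{2k}}{k(2k+1)} = -2+2\ln(2\pi z)-\frac{\beta\operatorname{Cl}_2(2\pi\alpha z)+\alpha\operatorname{Cl}_2(2\pi\beta z)}{2\pi z}. \]
   Context: $F_n$, $L_n$ are the Fibonacci and Lucas numbers ($F_0=0,F_1=1$, $L_0=2,L_1=1$, $w_n=w_{n-1}+w_{n-2}$); $\alpha=(1+\sqrt5)/2$, $\beta=(1-\sqrt5)/2$. $\zeta$ is the Riemann zeta function and $\operatorname{Cl}_2(x)=\sum_{k\ge1}\sin(kx)/k^2$ is the Clausen function. *)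

theory Defs
  imports "HOL-Analysis.Analysis" "HOL-Number_Theory.Fib"
begin

fun lucas :: "nat \<Rightarrow> nat" where
  "lucas 0 = 2"
| "lucas (Suc 0) = 1"
| "lucas (Suc (Suc n)) = lucas (Suc n) + lucas n"

definition golden_alpha :: real where "golden_alpha = (1 + sqrt 5) / 2"
definition golden_beta :: real where "golden_beta = (1 - sqrt 5) / 2"

definition zeta_real :: "real \<Rightarrow> real" where
  "zeta_real s = (\<Sum>n. 1 / real (Suc n) powr s)"

definition clausen2 :: "real \<Rightarrow> real" where
  "clausen2 x = (\<Sum>k. sin (real (Suc k) * x) / (real (Suc k))\<^sup>2)"

end

theory Submission
  imports Defs "HOL-Real_Asymp.Real_Asymp"
begin


lemma zeta_sums:
  assumes "k \<ge> 1"
  shows "(\<lambda>n. 1 / real (Suc n) ^ (2*k)) sums zeta_real (2 * real k)"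
proof -
  have eq: "(\<lambda>n. 1 / real (Suc n) powr (2 * real k)) = (\<lambda>n. 1 / real (Suc n) ^ (2*k))"
  proof
    fix n
    have "real (Suc n) powr (2 * real k) = real (Suc n) powr (real (2*k))" by simp
    also have "\<dots> = real (Suc n) ^ (2*k)" by (rule powr_realpow) simp
    finally show "1 / real (Suc n) powr (2 * real k) = 1 / real (Suc n) ^ (2*k)" by simp
  qed
  have s2: "summable (\<lambda>n. 1 / real (Suc n) ^ 2)"
    using inverse_squares_sums by (simp add: sums_iff)
  have "summable (\<lambda>n. 1 / real (Suc n) ^ (2*k))"
  proof (rule summable_comparison_test[OF _ s2], intro exI allI impI)
    fix n :: nat
    have "real (Suc n) ^ 2 \<le> real (Suc n) ^ (2*k)"
      by (rule power_increasing) (use assms in auto)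
    then show "norm (1 / real (Suc n) ^ (2*k)) \<le> 1 / real (Suc n) ^ 2"
      by (simp add: frac_le)
  qed
  then show ?thesis unfolding zeta_real_def eq by (simp add: summable_sums)
qed

lemma zeta_le:
  assumes "k \<ge> 1"
  shows "0 \<le> zeta_real (2 * real k) \<and> zeta_real (2 * real k) \<le> 2"
proof -
  have s: "(\<lambda>n. 1 / real (Suc n) ^ (2*k)) sums zeta_real (2 * real k)" by (rule zeta_sums[OF assms])
  have "zeta_real (2 * real k) \<le> pi^2/6"
  proof (rule sums_le[OF _ s])
    show "(\<lambda>n. 1 / real (Suc n) ^ 2) sums (pi^2/6)" using inverse_squares_sums by simp
    fix n :: nat
    have "real (Suc n) ^ 2 \<le> real (Suc n) ^ (2*k)"
      by (rule power_increasing) (use assms in auto)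
    then show "1 / real (Suc n) ^ (2*k) \<le> 1 / real (Suc n) ^ 2"
      by (simp add: frac_le)
  qed
  moreover have "pi^2/6 \<le> 2"
  proof -
    have "pi \<le> 3.2" using pi_approx by simp
    hence "pi^2 \<le> 3.2^2" using pi_gt_zero by (intro power_mono) auto
    moreover have "(3.2::real)^2 \<le> 12" by (simp add: power2_eq_square)
    ultimately show ?thesis by linarith
  qed
  moreover have "0 \<le> zeta_real (2 * real k)"
    by (rule sums_le[OF _ sums_zero s]) simp
  ultimately show ?thesis by simp
qed



lemma log_series_shift:
  fixes u :: real
  assumes "0 \<le> u" "u < 1"
  shows "(\<lambda>k. u ^ Suc k / real (Suc k)) sums (- ln (1 - u))"
proof -
  have "(\<lambda>m. - ((-(-u))^m) / of_nat m) sums ln (1 + (-u))"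
    by (rule ln_series') (use assms in auto)
  hence "(\<lambda>m. - (u^m / real m)) sums ln (1 - u)" by simp
  hence "(\<lambda>m. u^m / real m) sums (- ln (1 - u))"
    using sums_minus by fastforce
  thus ?thesis by (subst sums_Suc_iff) simp
qed

lemma sin_log_sums:
  fixes t :: real
  assumes "0 < t" "t < 1"
  shows "(\<lambda>n. - ln (1 - t^2 / real (Suc n)^2)) sums (ln (pi*t) - ln (sin (pi*t)))"
proof -
  have pos: "0 < 1 - t^2 / real k ^2" if "k \<ge> 1" for k :: nat
  proof -
    have "t^2 < 1" using assms by (simp add: power_less_one_iff abs_less_iff)
    also have "1 \<le> real k ^ 2" using that by simp
    finally have "t^2 < real k ^ 2" .
    moreover have "0 < real k ^ 2" using that by simp
    ultimately show ?thesis by (simp add: field_simps)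
  qed
  have sp: "0 < sin (pi * t)" using assms by (intro sin_gt_zero) auto
  have "(\<lambda>N. \<Prod>k=1..N. 1 - t^2 / real k^2) \<longlonglongrightarrow> sin (pi * t) / (pi * t)"
    using sin_product_formula_real'[of t] assms by simp
  hence "(\<lambda>N. ln (\<Prod>k=1..N. 1 - t^2 / real k^2)) \<longlonglongrightarrow> ln (sin (pi * t) / (pi * t))"
    by (rule tendsto_ln) (use sp assms in simp)
  also have "(\<lambda>N. ln (\<Prod>k=1..N. 1 - t^2 / real k^2)) = (\<lambda>N. \<Sum>n<N. ln (1 - t^2 / real (Suc n)^2))"
  proof
    fix N
    have "ln (\<Prod>k=1..N. 1 - t^2 / real k^2) = (\<Sum>k=1..N. ln (1 - t^2 / real k^2))"
    proof (rule ln_prod)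
      fix i assume "i \<in> {1..N}"
      hence "0 < 1 - t^2 / real i ^2" by (intro pos) auto
      thus "1 - t^2 / real i ^2 \<noteq> 0" by linarith
    qed simp
    also have "\<dots> = (\<Sum>n<N. ln (1 - t^2 / real (Suc n)^2))"
      using sum.atLeast1_atMost_eq[of "\<lambda>k. ln (1 - t^2 / real k^2)" N] by simp
    finally show "ln (\<Prod>k=1..N. 1 - t^2 / real k^2) = (\<Sum>n<N. ln (1 - t^2 / real (Suc n)^2))" .
  qed
  finally have "(\<lambda>n. ln (1 - t^2 / real (Suc n)^2)) sums ln (sin (pi * t) / (pi * t))"
    by (simp add: sums_def)
  hence "(\<lambda>n. - ln (1 - t^2 / real (Suc n)^2)) sums (- ln (sin (pi * t) / (pi * t)))"
    by (rule sums_minus)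
  also have "- ln (sin (pi * t) / (pi * t)) = ln (pi*t) - ln (sin (pi*t))"
    using sp assms by (simp add: ln_div)
  finally show ?thesis .
qed

lemma zeta_log_sums:
  fixes t :: real
  assumes "0 < t" "t < 1"
  shows "(\<lambda>k. zeta_real (2 * real k) * t^(2*k) / real k) sums (ln (pi*t) - ln (sin (pi*t)))"
proof -
  define L where "L = ln (pi*t) - ln (sin (pi*t))"
  define F where "F = (\<lambda>(n::nat,k::nat). (t^2 / real (Suc n)^2) ^ Suc k / real (Suc k))"
  define g where "g = (\<lambda>n::nat. - ln (1 - t^2 / real (Suc n)^2))"
  define b where "b = (\<lambda>k::nat. zeta_real (2 * real (Suc k)) * t^(2 * Suc k) / real (Suc k))"
  have u: "0 \<le> t^2 / real (Suc n)^2 \<and> t^2 / real (Suc n)^2 < 1" for n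
  proof -
    have "t^2 < 1" using assms by (simp add: power_less_one_iff abs_less_iff)
    also have "1 \<le> real (Suc n) ^ 2" by simp
    finally show ?thesis by (simp add: field_simps)
  qed
  have Fnn: "F (n,k) \<ge> 0" for n k unfolding F_def by simp
  have hn: "((\<lambda>k. F (n,k)) has_sum g n) UNIV" for n
  proof (rule sums_nonneg_imp_has_sum)
    show "(\<lambda>k. F (n, k)) sums g n"
      unfolding F_def g_def using log_series_shift[of "t^2 / real (Suc n)^2"] u[of n] by simp
  qed (rule Fnn)
  have gnn: "g n \<ge> 0" for n
    unfolding g_def using u[of n] by (simp add: ln_le_zero_iff)
  have hg: "(g has_sum L) UNIV"
    by (rule sums_nonneg_imp_has_sum) (use sin_log_sums[OF assms] gnn in \<open>auto simp: g_def L_def\<close>)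
  have summ: "F summable_on Sigma UNIV (\<lambda>_. UNIV)"
    by (rule summable_on_SigmaI[OF hn]) (use hg Fnn in \<open>auto simp: has_sum_iff\<close>)
  have hF: "(F has_sum L) (Sigma UNIV (\<lambda>_. UNIV))"
    by (rule has_sum_SigmaI[OF hn hg summ])
  hence hF': "((\<lambda>(x,y). F (y,x)) has_sum L) (UNIV \<times> UNIV)"
    by (subst has_sum_swap[symmetric]) simp
  have hb: "((\<lambda>n. (\<lambda>(x,y). F (y,x)) (k,n)) has_sum b k) UNIV" for k
  proof (rule sums_nonneg_imp_has_sum)
    have "(\<lambda>n. t^(2 * Suc k) / real (Suc k) * (1 / real (Suc n) ^ (2 * Suc k))) sums
            (t^(2 * Suc k) / real (Suc k) * zeta_real (2 * real (Suc k)))"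
      by (rule sums_mult) (rule zeta_sums, simp)
    moreover have "(\<lambda>n. (\<lambda>(x,y). F (y,x)) (k,n)) =
        (\<lambda>n. t^(2 * Suc k) / real (Suc k) * (1 / real (Suc n) ^ (2 * Suc k)))"
    proof
      fix n
      have "(\<lambda>(x,y). F (y,x)) (k,n) = (t^2 / real (Suc n)^2) ^ Suc k / real (Suc k)"
        by (simp only: F_def case_prod_conv)
      also have "\<dots> = t^(2 * Suc k) / real (Suc n)^(2 * Suc k) / real (Suc k)"
        by (simp only: power_divide power_mult)
      finally show "(\<lambda>(x,y). F (y,x)) (k,n) = t^(2 * Suc k) / real (Suc k) * (1 / real (Suc n) ^ (2 * Suc k))"
        by simp
    qed
    ultimately show "(\<lambda>n. (\<lambda>(x,y). F (y,x)) (k,n)) sums b k"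
      by (simp add: b_def mult.commute)
  qed (simp add: Fnn)
  have "(b has_sum L) UNIV"
    by (rule has_sum_Sigma'[OF hF' hb])
  hence "b sums L" by (rule has_sum_imp_sums)
  thus ?thesis using sums_Suc_iff[of "\<lambda>k. zeta_real (2*real k) * t^(2*k) / real k" L]
    unfolding L_def b_def by simp
qed



definition Tz :: "nat \<Rightarrow> real \<Rightarrow> real" where
  "Tz k x = zeta_real (2 * real k) * x^(2*k) / (real k * (2 * real k + 1))"

definition ff :: "real \<Rightarrow> real" where "ff x = (\<Sum>k. Tz k x)"

lemma Tz_bound:
  assumes "\<bar>x\<bar> \<le> 1"
  shows "\<bar>Tz k x\<bar> \<le> 2 / real k ^ 2"
proof (cases "k = 0")
  case True thus ?thesis by (simp add: Tz_def)
next
  case False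
  hence k: "k \<ge> 1" by simp
  from zeta_le[OF k] have z: "0 \<le> zeta_real (2 * real k)" "zeta_real (2 * real k) \<le> 2" by auto
  have "\<bar>x\<bar>^(2*k) \<le> 1" by (rule power_le_one) (use assms in auto)
  hence xp: "\<bar>x^(2*k)\<bar> \<le> 1" by (simp add: power_abs)
  have "\<bar>Tz k x\<bar> = zeta_real (2 * real k) * \<bar>x^(2*k)\<bar> / (real k * (2 * real k + 1))"
    using z by (simp add: Tz_def abs_mult)
  also have "\<dots> \<le> 2 * 1 / (real k * (2 * real k + 1))"
    using z xp k by (intro divide_right_mono mult_mono) auto
  also have "\<dots> \<le> 2 / real k ^ 2"
  proof (rule frac_le)
    have "real k * real k \<le> real k * (2 * real k + 1)" by (rule mult_left_mono) auto
    thus "real k ^ 2 \<le> real k * (2 * real k + 1)" by (simp add: power2_eq_square)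
  qed (use k in auto)
  finally show ?thesis .
qed

lemma summable_two_inv_sq: "summable (\<lambda>k. 2 / real k ^ 2)"
proof -
  have "summable (\<lambda>n. 1 / real (Suc n) ^ 2)"
    using inverse_squares_sums by (simp add: sums_iff)
  hence "summable (\<lambda>n. 1 / real n ^ 2)"
    by (subst summable_Suc_iff[symmetric]) simp
  hence "summable (\<lambda>n. 2 * (1 / real n ^ 2))" by (rule summable_mult)
  thus ?thesis by simp
qed

lemma ff_sums: "\<bar>x\<bar> \<le> 1 \<Longrightarrow> (\<lambda>k. Tz k x) sums ff x"
  unfolding ff_def
  by (rule summable_sums, rule summable_comparison_test[OF _ summable_two_inv_sq])
     (use Tz_bound in auto)

lemma ff_cont: "continuous_on {-1..1} ff"
proof (rule uniform_limit_theorem)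
  show "uniform_limit {-1..1} (\<lambda>n x. \<Sum>k<n. Tz k x) ff sequentially"
    unfolding ff_def
    by (rule Weierstrass_m_test[OF _ summable_two_inv_sq]) (use Tz_bound in auto)
  show "\<forall>\<^sub>F n in sequentially. continuous_on {-1..1} (\<lambda>x. \<Sum>k<n. Tz k x)"
  proof -
    have "\<And>k. Tz k = (\<lambda>x. (zeta_real (2*real k) / (real k * (2*real k+1))) * x^(2*k))"
      by (auto simp: Tz_def fun_eq_iff)
    thus ?thesis by (simp only:) (intro always_eventually allI continuous_intros)
  qed
qed simp

lemma S_deriv:
  assumes "0 < t" "t < 1"
  shows "((\<lambda>x. x * ff x) has_real_derivative (ln (pi*t) - ln (sin (pi*t)))) (at t)"
proof -
  define \<rho> where "\<rho> = (1 + t) / 2"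
  have \<rho>: "t < \<rho>" "\<rho> < 1" "0 < \<rho>" using assms by (auto simp: \<rho>_def)
  define f' where "f' = (\<lambda>k x. zeta_real (2 * real k) * x^(2*k) / real k)"
  have der: "((\<lambda>x. Tz k x * x) has_field_derivative f' k x) (at x within {-\<rho>..\<rho>})" for k x
  proof -
    define c where "c = zeta_real (2 * real k) / (real k * (2 * real k + 1))"
    have e: "(\<lambda>x. Tz k x * x) = (\<lambda>x. c * x ^ Suc (2*k))"
      by (auto simp: Tz_def c_def)
    have "((\<lambda>x. c * x ^ Suc (2*k)) has_real_derivative c * (real (Suc (2*k)) * x ^ (Suc (2*k) - Suc 0))) (at x)"
      by (intro DERIV_cmult DERIV_pow)
    hence "((\<lambda>x. c * x ^ Suc (2*k)) has_real_derivative c * (real (Suc (2*k)) * x ^ (2*k))) (at x)"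
      by simp
    moreover have "c * (real (Suc (2*k)) * x ^ (2*k)) = f' k x"
    proof (cases "k = 0")
      case True thus ?thesis by (simp add: c_def f'_def)
    next
      case False
      have a: "real k \<noteq> 0" "2 * real k + 1 \<noteq> 0" using False by auto
      have aux: "\<And>m K Z X::real. m \<noteq> 0 \<Longrightarrow> K \<noteq> 0 \<Longrightarrow> Z / (K * m) * (m * X) = Z * X / K"
        by (simp add: field_simps)
      have "real (Suc (2*k)) = 2 * real k + 1" by simp
      show ?thesis unfolding c_def f'_def \<open>real (Suc (2*k)) = 2 * real k + 1\<close> by (rule aux[OF a(2) a(1)])
    qed
    ultimately show ?thesis unfolding e by (auto intro: has_field_derivative_at_within)
  qed
  have unif: "uniformly_convergent_on {-\<rho>..\<rho>} (\<lambda>n x. \<Sum>i<n. f' i x)"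
  proof (rule Weierstrass_m_test')
    show "summable (\<lambda>k. 2 * (\<rho>^2)^k)"
      using \<rho> by (intro summable_mult summable_geometric) (simp add: power_less_one_iff abs_less_iff)
    fix k :: nat and x :: real assume x: "x \<in> {-\<rho>..\<rho>}"
    show "norm (f' k x) \<le> 2 * (\<rho>^2)^k"
    proof (cases "k = 0")
      case True thus ?thesis by (simp add: f'_def)
    next
      case False
      hence k: "k \<ge> 1" by simp
      from zeta_le[OF k] have z: "0 \<le> zeta_real (2 * real k)" "zeta_real (2 * real k) \<le> 2" by auto
      have "\<bar>x\<bar> \<le> \<rho>" using x by auto
      hence "\<bar>x\<bar>^(2*k) \<le> \<rho>^(2*k)" by (intro power_mono) auto
      hence xp: "\<bar>x^(2*k)\<bar> \<le> (\<rho>^2)^k"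
        by (simp add: power_abs power_mult)
      have "norm (f' k x) = zeta_real (2 * real k) * \<bar>x^(2*k)\<bar> / real k"
        using z by (simp add: f'_def abs_mult)
      also have "\<dots> \<le> zeta_real (2 * real k) * \<bar>x^(2*k)\<bar>"
        using frac_le[of "zeta_real (2 * real k) * \<bar>x^(2*k)\<bar>" "zeta_real (2 * real k) * \<bar>x^(2*k)\<bar>" 1 "real k"] z k
        by simp
      also have "\<dots> \<le> 2 * (\<rho>^2)^k"
        using z xp by (intro mult_mono) auto
      finally show ?thesis .
    qed
  qed
  have t_int: "t \<in> interior {-\<rho>..\<rho>}" using \<rho> assms by auto
  have "((\<lambda>x. \<Sum>k. Tz k x * x) has_field_derivative (\<Sum>k. f' k t)) (at t)"
    by (rule has_field_derivative_series'(2)[OF _ der unif _ _ t_int, of 0])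
       (use \<rho> in \<open>auto simp: Tz_def\<close>)
  moreover have "(\<Sum>k. f' k t) = ln (pi*t) - ln (sin (pi*t))"
    using zeta_log_sums[OF assms] by (simp add: f'_def sums_iff)
  ultimately have "((\<lambda>x. \<Sum>k. Tz k x * x) has_field_derivative (ln (pi*t) - ln (sin (pi*t)))) (at t)"
    by simp
  thus ?thesis
  proof (rule has_field_derivative_transform_within_open)
    show "open {-1<..<(1::real)}" by simp
    show "t \<in> {-1<..<1}" using assms by simp
    fix x :: real assume "x \<in> {-1<..<1}"
    hence "(\<lambda>k. Tz k x) sums ff x" by (intro ff_sums) auto
    hence "(\<lambda>k. Tz k x * x) sums (ff x * x)" by (rule sums_mult2)
    thus "(\<Sum>k. Tz k x * x) = x * ff x" by (simp add: sums_iff mult.commute)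
  qed
qed

definition QQ :: "real \<Rightarrow> real" where
  "QQ x = 2 * pi * (x * ff x - x * ln (2 * pi * x) + x)"

lemma xln_cont: "continuous_on {0..1} (\<lambda>x::real. x * ln (2 * pi * x))"
proof (rule continuous_on_IccI)
  show "((\<lambda>x::real. x * ln (2 * pi * x)) \<longlongrightarrow> 0 * ln (2 * pi * 0)) (at_right 0)"
    by simp real_asymp
  show "((\<lambda>x::real. x * ln (2 * pi * x)) \<longlongrightarrow> 1 * ln (2 * pi * 1)) (at_left 1)"
    by (rule tendsto_intros | simp)+
  fix x :: real assume "0 < x" "x < 1"
  thus "(\<lambda>x. x * ln (2 * pi * x)) \<midarrow>x\<rightarrow> x * ln (2 * pi * x)"
    by (intro tendsto_intros) auto
qed simp

lemma QQ_cont: "continuous_on {0..1} QQ"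
proof -
  have "continuous_on {0..1} ff" by (rule continuous_on_subset[OF ff_cont]) auto
  thus ?thesis unfolding QQ_def by (intro continuous_intros xln_cont)
qed

lemma QQ_deriv:
  assumes "0 < t" "t < 1"
  shows "(QQ has_real_derivative (- 2 * pi * ln (2 * sin (pi * t)))) (at t)"
proof -
  have sp: "0 < sin (pi * t)" using assms by (intro sin_gt_zero) auto
  have d1: "((\<lambda>x. x * ff x) has_real_derivative (ln (pi*t) - ln (sin (pi*t)))) (at t)"
    by (rule S_deriv[OF assms])
  have d2: "((\<lambda>x. x * ln (2*pi*x)) has_real_derivative (ln (2*pi*t) + 1)) (at t)"
    using assms by (auto intro!: derivative_eq_intros)
  have d3: "((\<lambda>x. x) has_real_derivative 1) (at t)" by (rule DERIV_ident)
  have QQe: "QQ = (\<lambda>x. 2 * pi * (x * ff x - x * ln (2 * pi * x) + x))"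
    by (simp add: QQ_def fun_eq_iff)
  have A: "(QQ has_real_derivative 2 * pi * ((ln (pi*t) - ln (sin (pi*t))) - (ln (2*pi*t) + 1) + 1)) (at t)"
    unfolding QQe by (intro DERIV_cmult DERIV_add DERIV_diff d1 d2 d3)
  have "ln (2*(pi*t)) = ln 2 + ln (pi*t)" using assms by (intro ln_mult_pos) auto
  hence l1: "ln (2*pi*t) = ln 2 + ln (pi*t)" by (simp add: mult.assoc)
  have l2: "ln (2 * sin (pi*t)) = ln 2 + ln (sin (pi*t))" using sp by (simp add: ln_mult)
  have E: "2 * pi * ((ln (pi*t) - ln (sin (pi*t))) - (ln (2*pi*t) + 1) + 1)
      = - 2 * pi * ln (2 * sin (pi * t))"
    unfolding l1 l2 by (simp add: algebra_simps)
  show ?thesis using A unfolding E .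
qed

lemma QQ_integral:
  assumes "0 < x" "x \<le> 1"
  shows "((\<lambda>t. - 2 * pi * ln (2 * sin (pi * t))) has_integral QQ x) {0..x}"
proof -
  have "((\<lambda>t. - 2 * pi * ln (2 * sin (pi * t))) has_integral QQ x - QQ 0) {0..x}"
  proof (rule fundamental_theorem_of_calculus_interior)
    show "continuous_on {0..x} QQ" by (rule continuous_on_subset[OF QQ_cont]) (use assms in auto)
    fix t assume "t \<in> {0<..<x}"
    thus "(QQ has_vector_derivative - 2 * pi * ln (2 * sin (pi * t))) (at t)"
      using assms by (subst has_real_derivative_iff_has_vector_derivative[symmetric]) (intro QQ_deriv; auto)
  qed (use assms in auto)
  thus ?thesis by (simp add: QQ_def)
qed



lemma aux_sq: "(1 - r*c)^2 + (r*y)^2 = 1 - 2*r*c + r^2*(y^2 + c^2)" for r c y :: real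
  by (simp add: power2_eq_square algebra_simps)

lemma cos_log_sums:
  fixes r \<theta> :: real
  assumes "0 \<le> r" "r < 1"
  shows "(\<lambda>k. r^Suc k * cos (real (Suc k) * \<theta>) / real (Suc k)) sums (- (1/2) * ln (1 - 2*r*cos \<theta> + r^2))"
proof -
  define w where "w = complex_of_real r * cis \<theta>"
  have nw: "norm w = r" using assms by (simp add: w_def norm_mult)
  have "(\<lambda>n. - ((-(-w))^n) / of_nat n) sums Ln (1 + (-w))"
    by (rule Ln_series') (use nw assms in simp)
  hence sc: "(\<lambda>n. Re (- ((-(-w))^n) / of_nat n)) sums Re (Ln (1 + (-w)))"
    by (simp add: sums_complex_iff)
  have re: "Re (- ((-(-w))^n) / of_nat n) = - (r^n * cos (real n * \<theta>) / real n)" for n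
  proof -
    have c: "Re (cis \<theta> ^ n) = cos (real n * \<theta>)" by (rule cos_n_Re_cis_pow_n[symmetric])
    show ?thesis by (simp add: w_def power_mult_distrib Re_divide_of_nat c)
  qed
  have nz: "1 - w \<noteq> 0"
  proof
    assume "1 - w = 0" hence "norm w = 1" by simp
    thus False using nw assms by simp
  qed
  from sc have s0: "(\<lambda>n. - (r^n * cos (real n * \<theta>) / real n)) sums Re (Ln (1 + (-w)))"
    by (simp only: re)
  have "Re (Ln (1 + (-w))) = ln (norm (1 - w))" using nz by simp
  with s0 have s: "(\<lambda>n. - (r^n * cos (real n * \<theta>) / real n)) sums ln (norm (1 - w))"
    by simp
  have "(norm (1 - w))^2 = 1 - 2*r*cos \<theta> + r^2"
  proof -
    have "(norm (1 - w))^2 = (1 - r * cos \<theta>)^2 + (r * sin \<theta>)^2"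
      by (simp add: cmod_power2 w_def)
    also have "\<dots> = 1 - 2*r*cos \<theta> + r^2 * ((sin \<theta>)^2 + (cos \<theta>)^2)"
      using aux_sq[of r "cos \<theta>" "sin \<theta>"] .
    finally show ?thesis by simp
  qed
  hence "ln (1 - 2*r*cos \<theta> + r^2) = 2 * ln (norm (1 - w))"
    using nz by (metis ln_realpow of_nat_numeral zero_less_norm_iff)
  hence e: "ln (norm (1 - w)) = (1/2) * ln (1 - 2*r*cos \<theta> + r^2)" by simp
  from sums_minus[OF s] have "(\<lambda>n. r^n * cos (real n * \<theta>) / real n) sums (- (1/2) * ln (1 - 2*r*cos \<theta> + r^2))"
    unfolding e by simp
  thus ?thesis by (subst sums_Suc_iff) simp
qed

lemma aux_bound:
  fixes R c a p :: real
  assumes "0 \<le> R" "\<bar>c\<bar> \<le> 1" "1 \<le> a"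
  shows "\<bar>p * (R * c / a)\<bar> \<le> \<bar>p\<bar> * R"
proof -
  have "\<bar>R * c / a\<bar> = R * \<bar>c\<bar> / a" using assms by (simp add: abs_mult abs_divide)
  also have "\<dots> \<le> R * \<bar>c\<bar> / 1" by (rule frac_le) (use assms in auto)
  also have "\<dots> \<le> R * 1" using assms by (simp add: mult_left_le)
  finally have X: "\<bar>R * c / a\<bar> \<le> R" by simp
  have "\<bar>p * (R * c / a)\<bar> = \<bar>p\<bar> * \<bar>R * c / a\<bar>" by (rule abs_mult)
  also have "\<dots> \<le> \<bar>p\<bar> * R" by (rule mult_left_mono[OF X]) simp
  finally show ?thesis .
qed

definition Pr :: "real \<Rightarrow> real \<Rightarrow> real" where
  "Pr r t = (\<Sum>k. r^Suc k * sin (real (Suc k) * (2*pi*t)) / real (Suc k)^2)"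

lemma summable_inv_Suc_sq: "summable (\<lambda>k. 1 / real (Suc k)^2)"
  using inverse_squares_sums by (simp add: sums_iff)

lemma Pr_deriv:
  assumes "0 \<le> r" "r < 1"
  shows "(Pr r has_real_derivative (- pi * ln (1 - 2*r*cos (2*pi*t) + r^2))) (at t)"
proof -
  define f where "f = (\<lambda>k t. r^Suc k * sin (real (Suc k) * (2*pi*t)) / real (Suc k)^2)"
  define f' where "f' = (\<lambda>k t. 2*pi * (r^Suc k * cos (real (Suc k) * (2*pi*t)) / real (Suc k)))"
  have der: "(f k has_field_derivative f' k x) (at x within UNIV)" for k x
  proof -
    define a where "a = real (Suc k)"
    define R where "R = r^Suc k"
    have a0: "a \<noteq> 0" by (simp add: a_def)
    have fe: "f k = (\<lambda>t. (R / a^2) * sin (a * (2*pi*t)))"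
      by (simp add: f_def a_def R_def fun_eq_iff)
    have d: "((\<lambda>t. sin (a * (2*pi*t))) has_real_derivative cos (a * (2*pi*x)) * (a * (2*pi))) (at x)"
      by (auto intro!: derivative_eq_intros)
    have "(f k has_field_derivative (R / a^2) * (cos (a * (2*pi*x)) * (a * (2*pi)))) (at x)"
      unfolding fe by (rule DERIV_cmult[OF d])
    moreover have aux: "\<And>R a c p::real. a \<noteq> 0 \<Longrightarrow> R / a^2 * (c * (a * p)) = p * (R * c / a)"
      by (simp add: field_simps power2_eq_square)
    have "(R / a^2) * (cos (a * (2*pi*x)) * (a * (2*pi))) = f' k x"
      unfolding f'_def aux[OF a0] by (simp add: a_def R_def)
    ultimately show ?thesis by simp
  qed
  have unif: "uniformly_convergent_on UNIV (\<lambda>n x. \<Sum>i<n. f' i x)"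
  proof (rule Weierstrass_m_test')
    show "summable (\<lambda>k. 2*pi * r^Suc k)"
      using assms by (intro summable_mult) (simp add: summable_geometric)
    fix k :: nat and x :: real
    have "\<bar>2*pi * (r^Suc k * cos (real (Suc k) * (2*pi*x)) / real (Suc k))\<bar> \<le> \<bar>2*pi\<bar> * r^Suc k"
      by (rule aux_bound) (use assms in auto)
    thus "norm (f' k x) \<le> 2*pi * r^Suc k"
      unfolding f'_def by simp
  qed
  have "((\<lambda>x. \<Sum>k. f k x) has_field_derivative (\<Sum>k. f' k t)) (at t)"
    by (rule has_field_derivative_series'(2)[OF _ der unif, of 0]) (auto simp: f_def)
  moreover have "(\<Sum>k. f' k t) = - pi * ln (1 - 2*r*cos (2*pi*t) + r^2)"
  proof -
    have "(\<lambda>k. f' k t) sums (2*pi * (- (1/2) * ln (1 - 2*r*cos (2*pi*t) + r^2)))"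
      unfolding f'_def by (rule sums_mult, rule cos_log_sums[OF assms])
    thus ?thesis by (simp add: sums_iff)
  qed
  moreover have "(\<lambda>x. \<Sum>k. f k x) = Pr r" by (simp add: f_def Pr_def fun_eq_iff)
  ultimately show ?thesis by simp
qed

lemma Pr_integral:
  assumes "0 \<le> r" "r < 1" "0 \<le> x"
  shows "((\<lambda>t. - pi * ln (1 - 2*r*cos (2*pi*t) + r^2)) has_integral Pr r x) {0..x}"
proof -
  have "((\<lambda>t. - pi * ln (1 - 2*r*cos (2*pi*t) + r^2)) has_integral Pr r x - Pr r 0) {0..x}"
  proof (rule fundamental_theorem_of_calculus)
    fix t assume "t \<in> {0..x}"
    have "(Pr r has_real_derivative (- pi * ln (1 - 2*r*cos (2*pi*t) + r^2))) (at t)"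
      by (rule Pr_deriv[OF assms(1,2)])
    thus "(Pr r has_vector_derivative (- pi * ln (1 - 2*r*cos (2*pi*t) + r^2))) (at t within {0..x})"
      unfolding has_real_derivative_iff_has_vector_derivative by (rule has_vector_derivative_at_within)
  qed (use assms in auto)
  thus ?thesis by (simp add: Pr_def)
qed

lemma Pr_cont_r: "continuous_on {0..1} (\<lambda>r. Pr r x)"
proof (rule uniform_limit_theorem)
  show "uniform_limit {0..1} (\<lambda>n r. \<Sum>k<n. r^Suc k * sin (real (Suc k) * (2*pi*x)) / real (Suc k)^2) (\<lambda>r. Pr r x) sequentially"
    unfolding Pr_def
  proof (rule Weierstrass_m_test[OF _ summable_inv_Suc_sq])
    fix k :: nat and r :: real assume r: "r \<in> {0..1}"
    have a: "r^Suc k \<le> 1" using power_le_one[of r "Suc k"] r by auto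
    have b: "0 \<le> r^Suc k" using r by simp
    have "\<bar>r^Suc k * sin (real (Suc k) * (2*pi*x))\<bar> = r^Suc k * \<bar>sin (real (Suc k) * (2*pi*x))\<bar>"
      by (simp only: abs_mult abs_of_nonneg[OF b])
    also have "\<dots> \<le> 1 * 1" by (rule mult_mono) (use a b in auto)
    finally have "\<bar>r^Suc k * sin (real (Suc k) * (2*pi*x))\<bar> \<le> 1 * 1" .
    thus "norm (r^Suc k * sin (real (Suc k) * (2*pi*x)) / real (Suc k)^2) \<le> 1 / real (Suc k)^2"
      by (simp add: divide_right_mono)
  qed
  show "\<forall>\<^sub>F n in sequentially. continuous_on {0..1} (\<lambda>r. \<Sum>k<n. r^Suc k * sin (real (Suc k) * (2*pi*x)) / real (Suc k)^2)"
    by (intro always_eventually allI continuous_intros) auto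
qed simp

lemma Pr_one: "Pr 1 x = clausen2 (2*pi*x)"
  by (simp add: Pr_def clausen2_def)



lemma core_pos:
  assumes x: "0 < x" "x \<le> 1"
  shows "clausen2 (2*pi*x) = QQ x"
proof -
  define r where "r = (\<lambda>n::nat. 1 - 1 / (real n + 2))"
  have r0: "1/2 \<le> r n" "r n < 1" for n
    by (auto simp: r_def field_simps)
  have rin: "r n \<in> {0..1}" for n using r0[of n] by auto
  have rlim: "r \<longlonglongrightarrow> 1" unfolding r_def by real_asymp
  have L1: "(\<lambda>n. Pr (r n) x) \<longlonglongrightarrow> clausen2 (2*pi*x)"
  proof -
    have "(\<lambda>n. Pr (r n) x) \<longlonglongrightarrow> Pr 1 x"
      by (rule continuous_on_tendsto_compose[OF Pr_cont_r rlim])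
         (use rin in \<open>auto intro!: always_eventually\<close>)
    thus ?thesis by (simp add: Pr_one)
  qed
  define D where "D = (\<lambda>n t. - pi * ln (1 - 2*r n*cos (2*pi*t) + (r n)^2))"
  define g where "g = (\<lambda>t. - 2 * pi * ln (2 * sin (pi * t)))"
  define h where "h = (\<lambda>t. 4*pi*ln 2 + g t)"
  define S where "S = {0<..<x}"
  have intD: "(D n has_integral Pr (r n) x) {0..x}" for n
    unfolding D_def by (rule Pr_integral) (use r0[of n] x in auto)
  have intg: "(g has_integral QQ x) {0..x}"
    unfolding g_def by (rule QQ_integral[OF x])
  have Dint: "D n integrable_on S" for n
    unfolding S_def using intD[of n] integrable_on_open_interval_real has_integral_integrable by blast
  have hint: "h integrable_on S"
  proof -
    have "h integrable_on {0..x}"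
      unfolding h_def by (intro integrable_add integrable_const_ivl has_integral_integrable[OF intg])
    thus ?thesis unfolding S_def using integrable_on_open_interval_real by blast
  qed
  have pt: "norm (D n t) \<le> h t \<and> (\<lambda>n. D n t) \<longlonglongrightarrow> g t" if t: "t \<in> S" for n t
  proof -
    from t x have t01: "0 < t" "t < 1" by (auto simp: S_def)
    define c where "c = cos (2*pi*t)"
    define y where "y = sin (pi*t)"
    have y0: "0 < y" unfolding y_def using t01 by (intro sin_gt_zero) auto
    have y1: "y \<le> 1" unfolding y_def by simp
    have c_eq: "1 - c = 2 * y^2"
      unfolding c_def y_def using cos_double_sin[of "pi*t"] by (simp add: mult.assoc)
    have c1: "-1 \<le> c" unfolding c_def by simp
    define A where "A = 1 - 2*r n*c + (r n)^2"
    have A_lo: "2 * y^2 \<le> A"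
    proof -
      have "A - 2*y^2 = (1 - r n)^2 + (2 * r n - 1) * (1 - c)"
        unfolding A_def c_eq[symmetric] by (simp add: power2_eq_square algebra_simps)
      moreover have "(2 * r n - 1) * (1 - c) \<ge> 0"
        using r0[of n] c_eq by (intro mult_nonneg_nonneg) auto
      moreover have "(1 - r n)^2 \<ge> 0" by simp
      ultimately show ?thesis by linarith
    qed
    have A_hi: "A \<le> 4"
    proof -
      have "r n * (-c) \<le> r n * 1" by (rule mult_left_mono) (use r0[of n] c1 in auto)
      hence "- 2 * r n * c \<le> 2 * r n" by (simp add: algebra_simps)
      moreover have "(r n)^2 \<le> 1" using r0[of n] by (simp add: power_le_one abs_le_iff power2_le_iff_abs_le)
      ultimately show ?thesis unfolding A_def using r0[of n] by linarith
    qed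
    have y2pos: "0 < 2 * y^2" using y0 by simp
    have Apos: "0 < A" using A_lo y2pos by linarith
    have lnA_hi: "ln A \<le> 2 * ln 2"
    proof -
      have "ln A \<le> ln 4" using Apos A_hi by simp
      also have "ln (4::real) = 2 * ln 2"
        using ln_realpow[of 2 2] by simp
      finally show ?thesis .
    qed
    have lnA_lo: "ln 2 + 2 * ln y \<le> ln A"
    proof -
      have "ln (2 * y^2) \<le> ln A" using A_lo y2pos Apos by (subst ln_le_cancel_iff) auto
      moreover have "ln (2 * y^2) = ln 2 + 2 * ln y"
        using y0 by (simp add: ln_mult ln_realpow)
      ultimately show ?thesis by simp
    qed
    have lny: "ln y \<le> 0" using y0 y1 by simp
    have ln2: "0 \<le> ln (2::real)" by simp
    have absA: "\<bar>ln A\<bar> \<le> 2 * ln 2 - 2 * ln y"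
      using lnA_hi lnA_lo lny ln2 by linarith
    have hval: "h t = pi * (2 * ln 2 - 2 * ln y)"
    proof -
      have "ln (2 * y) = ln 2 + ln y" using y0 by (simp add: ln_mult)
      thus ?thesis unfolding h_def g_def y_def[symmetric] by (simp add: algebra_simps)
    qed
    have "norm (D n t) = pi * \<bar>ln A\<bar>"
      unfolding D_def A_def c_def by (simp add: abs_mult)
    also have "\<dots> \<le> pi * (2 * ln 2 - 2 * ln y)"
      using absA by (intro mult_left_mono) auto
    finally have bound: "norm (D n t) \<le> h t" using hval by simp
    have "(\<lambda>n. 1 - 2*r n*c + (r n)^2) \<longlonglongrightarrow> 1 - 2*1*c + 1^2"
      by (intro tendsto_intros rlim)
    hence "(\<lambda>n. - pi * ln (1 - 2*r n*c + (r n)^2)) \<longlonglongrightarrow> - pi * ln (1 - 2*1*c + 1^2)"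
    proof -
      have e4: "(1::real) - 2*1*c + 1^2 = 2 * (1 - c)" by simp
      have "0 < 2 * (1 - c)" unfolding c_eq using y0 by simp
      hence "1 - 2*1*c + 1^2 \<noteq> (0::real)" unfolding e4 by simp
      from tendsto_ln[OF \<open>(\<lambda>n. 1 - 2*r n*c + (r n)^2) \<longlonglongrightarrow> 1 - 2*1*c + 1^2\<close> this]
      show ?thesis by (rule tendsto_mult_left)
    qed
    moreover have "- pi * ln (1 - 2*1*c + 1^2) = g t"
    proof -
      have q: "1 - 2*1*c + 1^2 = (2*y)^2" using c_eq by (simp add: power2_eq_square algebra_simps)
      have "ln ((2*y)^2) = real 2 * ln (2*y)" by (rule ln_realpow)
      hence "ln (1 - 2*1*c + 1^2) = 2 * ln (2*y)" unfolding q by simp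
      thus ?thesis unfolding g_def y_def by simp
    qed
    ultimately have conv: "(\<lambda>n. D n t) \<longlonglongrightarrow> g t" unfolding D_def c_def by simp
    from bound conv show ?thesis by simp
  qed
  have DC: "(\<lambda>n. integral S (D n)) \<longlonglongrightarrow> integral S g"
    by (rule dominated_convergence(2)[OF Dint hint]) (use pt in auto)
  have "integral S (D n) = Pr (r n) x" for n
    unfolding S_def using intD[of n] integral_open_interval_real[of 0 x "D n"] integral_unique by metis
  moreover have "integral S g = QQ x"
    unfolding S_def using intg integral_open_interval_real[of 0 x g] integral_unique by metis
  ultimately have "(\<lambda>n. Pr (r n) x) \<longlonglongrightarrow> QQ x" using DC by simp
  from LIMSEQ_unique[OF L1 this] show ?thesis .
qed



lemma clausen2_minus: "clausen2 (- \<theta>) = - clausen2 \<theta>"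
proof -
  have sm: "summable (\<lambda>k. sin (real (Suc k) * \<theta>) / (real (Suc k))\<^sup>2)"
  proof (rule summable_comparison_test[OF _ summable_inv_Suc_sq], intro exI allI impI)
    fix k :: nat
    have "\<bar>sin (real (Suc k) * \<theta>)\<bar> \<le> 1" by simp
    thus "norm (sin (real (Suc k) * \<theta>) / (real (Suc k))\<^sup>2) \<le> 1 / real (Suc k)^2"
      by (simp add: abs_divide divide_right_mono)
  qed
  have "clausen2 (- \<theta>) = (\<Sum>k. - (sin (real (Suc k) * \<theta>) / (real (Suc k))\<^sup>2))"
    unfolding clausen2_def by simp
  also have "\<dots> = - clausen2 \<theta>" unfolding clausen2_def by (rule suminf_minus[OF sm])
  finally show ?thesis .
qed

lemma core_pos_sums:
  assumes "0 < x" "x \<le> 1"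
  shows "(\<lambda>k. zeta_real (2*real k) * x^(2*k) / (real k * (2*real k+1))) sums
           (ln (2*pi*x) - 1 + clausen2 (2*pi*x) / (2*pi*x))"
proof -
  have "(\<lambda>k. Tz k x) sums ff x" by (rule ff_sums) (use assms in auto)
  moreover have "ff x = ln (2*pi*x) - 1 + clausen2 (2*pi*x) / (2*pi*x)"
    using core_pos[OF assms] assms by (simp add: QQ_def field_simps)
  ultimately show ?thesis by (simp add: Tz_def)
qed

lemma core:
  fixes x :: real
  assumes "0 < \<bar>x\<bar>" "\<bar>x\<bar> \<le> 1"
  shows "(\<lambda>k. zeta_real (2*real k) * x^(2*k) / (real k * (2*real k+1))) sums
           (ln (2*pi*\<bar>x\<bar>) - 1 + clausen2 (2*pi*x) / (2*pi*x))"
proof (cases "x > 0")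
  case True thus ?thesis using core_pos_sums[of x] assms by simp
next
  case False
  hence u: "0 < -x" "-x \<le> 1" using assms by auto
  have ev: "(-x)^(2*k) = x^(2*k)" for k by simp
  have cl: "clausen2 (2*pi*(-x)) / (2*pi*(-x)) = clausen2 (2*pi*x) / (2*pi*x)"
  proof -
    have "clausen2 (2*pi*(-x)) = - clausen2 (2*pi*x)"
      using clausen2_minus[of "2*pi*x"] by simp
    thus ?thesis by simp
  qed
  have ab: "\<bar>x\<bar> = -x" using False by simp
  show ?thesis using core_pos_sums[OF u] unfolding ev cl ab .
qed

lemma lucas_closed:
  "real (lucas n) = golden_alpha ^ n + golden_beta ^ n"
proof (induct n rule: lucas.induct)
  case 1 thus ?case by simp
next
  case 2 thus ?case by (simp add: golden_alpha_def golden_beta_def field_simps)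
next
  case (3 n)
  have a2: "golden_alpha ^ 2 = golden_alpha + 1"
    by (simp add: golden_alpha_def power2_eq_square field_simps)
  have b2: "golden_beta ^ 2 = golden_beta + 1"
    by (simp add: golden_beta_def power2_eq_square field_simps)
  have "real (lucas (Suc (Suc n))) = real (lucas (Suc n)) + real (lucas n)" by simp
  also have "\<dots> = golden_alpha^n * (golden_alpha + 1) + golden_beta^n * (golden_beta + 1)"
    using 3 by (simp add: algebra_simps)
  also have "\<dots> = golden_alpha ^ Suc (Suc n) + golden_beta ^ Suc (Suc n)"
    unfolding a2[symmetric] b2[symmetric] by (simp add: power2_eq_square)
  finally show ?case .
qed

lemma fib_closed:
  "real (fib n) = (golden_alpha ^ n - golden_beta ^ n) / sqrt 5"
  unfolding golden_alpha_def golden_beta_def by (rule fib_closed_form)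



theorem theorem17:
  fixes z :: real
  assumes "0 < \<bar>z\<bar>" and "\<bar>z\<bar> \<le> 1 / golden_alpha"
  shows "((\<lambda>k. real (fib (2*k)) * zeta_real (2 * real k) * z ^ (2*k) / (real k * (2 * real k + 1)))
           sums (2 * ln golden_alpha / sqrt 5
                 - (golden_beta * clausen2 (2 * pi * golden_alpha * z)
                    - golden_alpha * clausen2 (2 * pi * golden_beta * z)) / (2 * sqrt 5 * pi * z))) \<and>
         ((\<lambda>k. real (lucas (2*k)) * zeta_real (2 * real k) * z ^ (2*k) / (real k * (2 * real k + 1)))
           sums (-2 + 2 * ln (2 * pi * \<bar>z\<bar>)
                 - (golden_beta * clausen2 (2 * pi * golden_alpha * z)
                    + golden_alpha * clausen2 (2 * pi * golden_beta * z)) / (2 * pi * z)))"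
proof -
  define a where "a = golden_alpha"
  define b where "b = golden_beta"
  have a1: "1 < a" unfolding a_def golden_alpha_def
  proof -
    have "1 < sqrt 5" by simp
    thus "1 < (1 + sqrt 5) / 2" by simp
  qed
  have a0: "0 < a" using a1 by simp
  have ab: "a * b = -1" unfolding a_def b_def golden_alpha_def golden_beta_def
    by (simp add: field_simps power2_eq_square[symmetric])
  have bdef: "b = - 1 / a" using ab a0 by (simp add: field_simps)
  have babs: "\<bar>b\<bar> = 1 / a" using bdef a0 by simp
  have z0: "z \<noteq> 0" using assms by simp
  define A where "A = a * z"
  define B where "B = b * z"
  have A1: "0 < \<bar>A\<bar>" "\<bar>A\<bar> \<le> 1"
  proof -
    show "0 < \<bar>A\<bar>" using a0 z0 by (simp add: A_def)
    have "\<bar>A\<bar> = a * \<bar>z\<bar>" using a0 by (simp add: A_def abs_mult)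
    also have "\<dots> \<le> a * (1 / a)" using assms(2) a0 unfolding a_def[symmetric] by (intro mult_left_mono) auto
    finally show "\<bar>A\<bar> \<le> 1" using a0 by simp
  qed
  have B1: "0 < \<bar>B\<bar>" "\<bar>B\<bar> \<le> 1"
  proof -
    show "0 < \<bar>B\<bar>" using a0 z0 bdef by (simp add: B_def)
    have "\<bar>B\<bar> = (1/a) * \<bar>z\<bar>" using babs by (simp add: B_def abs_mult)
    also have "\<dots> \<le> 1 * (1 / a)" using assms(2) a0 a1 unfolding a_def[symmetric]
      by (intro mult_mono) auto
    also have "\<dots> \<le> 1" using a1 by simp
    finally show "\<bar>B\<bar> \<le> 1" .
  qed
  define t where "t = (\<lambda>x::real. \<lambda>k. zeta_real (2*real k) * x^(2*k) / (real k * (2*real k+1)))"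
  define Ca where "Ca = clausen2 (2 * pi * a * z)"
  define Cb where "Cb = clausen2 (2 * pi * b * z)"
  define Lz where "Lz = ln (2 * pi * \<bar>z\<bar>)"
  define La where "La = ln a"
  have sA: "t A sums (Lz + La - 1 + Ca * (-b) / (2*pi*z))"
  proof -
    have "t A sums (ln (2*pi*\<bar>A\<bar>) - 1 + clausen2 (2*pi*A) / (2*pi*A))"
      unfolding t_def by (rule core[OF A1])
    moreover have "ln (2*pi*\<bar>A\<bar>) = Lz + La"
    proof -
      have "2*pi*\<bar>A\<bar> = (2*pi*\<bar>z\<bar>) * a" using a0 by (simp add: A_def abs_mult)
      thus ?thesis unfolding Lz_def La_def using a0 z0 by (simp add: ln_mult_pos)
    qed
    moreover have "clausen2 (2*pi*A) / (2*pi*A) = Ca * (-b) / (2*pi*z)"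
      unfolding Ca_def A_def bdef using a0 z0 by (simp add: field_simps mult.assoc)
    ultimately show ?thesis by simp
  qed
  have sB: "t B sums (Lz - La - 1 + Cb * (-a) / (2*pi*z))"
  proof -
    have "t B sums (ln (2*pi*\<bar>B\<bar>) - 1 + clausen2 (2*pi*B) / (2*pi*B))"
      unfolding t_def by (rule core[OF B1])
    moreover have "ln (2*pi*\<bar>B\<bar>) = Lz - La"
    proof -
      have e: "2*pi*\<bar>B\<bar> = (2*pi*\<bar>z\<bar>) / a" using babs by (simp add: B_def abs_mult)
      have "ln ((2*pi*\<bar>z\<bar>) / a) = ln (2*pi*\<bar>z\<bar>) - ln a"
        using a0 z0 by (intro ln_divide_pos) auto
      thus ?thesis unfolding Lz_def La_def e .
    qed
    moreover have "clausen2 (2*pi*B) / (2*pi*B) = Cb * (-a) / (2*pi*z)"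
    proof -
      have "clausen2 (2*pi*B) = Cb" unfolding Cb_def B_def by (simp add: mult.assoc)
      moreover have "1 / B = -a / z" unfolding B_def bdef using a0 z0 by (simp add: field_simps)
      ultimately show ?thesis by (metis (no_types, lifting) divide_divide_eq_left times_divide_eq_right
            divide_inverse inverse_eq_divide mult.commute)
    qed
    ultimately show ?thesis by simp
  qed
  have fibt: "real (fib (2*k)) * zeta_real (2 * real k) * z ^ (2*k) / (real k * (2 * real k + 1))
      = (t A k - t B k) / sqrt 5" for k
    unfolding fib_closed t_def A_def B_def a_def b_def
    by (simp add: divide_inverse power_mult_distrib algebra_simps)
  have lucast: "real (lucas (2*k)) * zeta_real (2 * real k) * z ^ (2*k) / (real k * (2 * real k + 1))
      = t A k + t B k" for k
    unfolding lucas_closed t_def A_def B_def a_def b_def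
    by (simp add: divide_inverse power_mult_distrib algebra_simps)
  have s5: "sqrt 5 \<noteq> 0" by simp
  have pz: "pi * z \<noteq> 0" using z0 by simp
  have F: "(\<lambda>k. (t A k - t B k) / sqrt 5) sums
      ((Lz + La - 1 + Ca * (-b) / (2*pi*z) - (Lz - La - 1 + Cb * (-a) / (2*pi*z))) / sqrt 5)"
    by (intro sums_divide sums_diff sA sB)
  have Fv: "(Lz + La - 1 + Ca * (-b) / (2*pi*z) - (Lz - La - 1 + Cb * (-a) / (2*pi*z))) / sqrt 5
      = 2 * La / sqrt 5 - (b * Ca - a * Cb) / (2 * sqrt 5 * pi * z)"
    using s5 pz by (simp add: field_simps)
  have Lu: "(\<lambda>k. t A k + t B k) sums
      ((Lz + La - 1 + Ca * (-b) / (2*pi*z)) + (Lz - La - 1 + Cb * (-a) / (2*pi*z)))"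
    by (intro sums_add sA sB)
  have Lv: "(Lz + La - 1 + Ca * (-b) / (2*pi*z)) + (Lz - La - 1 + Cb * (-a) / (2*pi*z))
      = -2 + 2 * Lz - (b * Ca + a * Cb) / (2 * pi * z)"
    using pz by (simp add: field_simps)
  show ?thesis
  proof
    show "(\<lambda>k. real (fib (2*k)) * zeta_real (2 * real k) * z ^ (2*k) / (real k * (2 * real k + 1)))
           sums (2 * ln golden_alpha / sqrt 5
                 - (golden_beta * clausen2 (2 * pi * golden_alpha * z)
                    - golden_alpha * clausen2 (2 * pi * golden_beta * z)) / (2 * sqrt 5 * pi * z))"
    proof -
      from F have "(\<lambda>k. (t A k - t B k) / sqrt 5) sums (2 * La / sqrt 5 - (b * Ca - a * Cb) / (2 * sqrt 5 * pi * z))"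
        by (simp only: Fv)
      thus ?thesis unfolding fibt La_def Ca_def Cb_def a_def b_def .
    qed
    show "(\<lambda>k. real (lucas (2*k)) * zeta_real (2 * real k) * z ^ (2*k) / (real k * (2 * real k + 1)))
           sums (-2 + 2 * ln (2 * pi * \<bar>z\<bar>)
                 - (golden_beta * clausen2 (2 * pi * golden_alpha * z)
                    + golden_alpha * clausen2 (2 * pi * golden_beta * z)) / (2 * pi * z))"
    proof -
      from Lu have "(\<lambda>k. t A k + t B k) sums (-2 + 2 * Lz - (b * Ca + a * Cb) / (2 * pi * z))"
        by (simp only: Lv)
      thus ?thesis unfolding lucast Lz_def Ca_def Cb_def a_def b_def .
    qed
  qed
qed


end
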